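(* Let $W:[0,\infty)\to\mathbb{R}$ be a bounded monotone $\mathcal{C}^1$ function with $W'$ bounded, let $\Omega(r)=r^{-2}\int_0^rW(s)s\,ds$, let $m\in\mathbb{Z}\setminus\{0\}$ and $s\in\mathbb{C}$ with $\mathrm{Re}(s)\ne0$, and set $\gamma(r)=s+im\Omega(r)$. Then the equation $-\partial_r\bigl(r^2\partial_r^*u\bigr)+\Bigl(m^2+\frac{imrW'(r)}{\gamma(r)}\Bigr)u=0$ on $(0,\infty)$ has no nontrivial solution $u\in H^1(\mathbb{R}_+,r\,dr)$.
   Context: $\partial_r^*=\partial_r+\frac1r$. This is the eigenvalue equation (for the radial velocity) of the linearization at a columnar vortex for two-dimensional perturbations ($k=0$). *)

theory Defs
  imports "HOL-Analysis.Analysis"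
begin

definition Omega :: "(real \<Rightarrow> real) \<Rightarrow> real \<Rightarrow> real" where
  "Omega W r = integral {0..r} (\<lambda>s. W s * s) / r\<^sup>2"

definition gam :: "(real \<Rightarrow> real) \<Rightarrow> int \<Rightarrow> complex \<Rightarrow> real \<Rightarrow> complex" where
  "gam W m s r = s + \<i> * of_int m * complex_of_real (Omega W r)"

end

theory Submission
  imports Defs
begin

lemma mono_deriv:
  fixes f f' :: "real \<Rightarrow> real"
  assumes "a \<le> b" "\<And>x. a \<le> x \<Longrightarrow> x \<le> b \<Longrightarrow> DERIV f x :> f' x \<and> f' x \<ge> 0"
  shows "f a \<le> f b"
proof (rule DERIV_nonneg_imp_increasing_open[OF assms(1)])
  show "\<And>x. a < x \<Longrightarrow> x < b \<Longrightarrow> \<exists>y. DERIV f x :> y \<and> 0 \<le> y"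
    by (meson assms(2) less_imp_le)
  show "continuous_on {a..b} f"
    using assms(2) by (intro continuous_at_imp_continuous_on ballI) (meson DERIV_isCont atLeastAtMost_iff)
qed

lemma amgm:
  fixes p p' y x r L :: real
  assumes "p \<noteq> 0" "r > 0" "x > 0" "L > 0" "y \<ge> 0" "p' \<ge> y" "p^2 \<le> L*r^2*x*y"
  shows "p'/p^2 + L*x \<ge> 2/r"
proof -
  have pp: "p^2 > 0" using assms(1) by simp
  have "y \<ge> p^2/(L*r^2*x)" using assms by (simp add: divide_le_eq mult.commute mult.left_commute)
  have d: "L*r^2*x > 0" using assms by simp
  have "p'/p^2 \<ge> y/p^2" using assms pp by (simp add: divide_right_mono)
  moreover have "y/p^2 \<ge> 1/(L*r^2*x)" using assms pp d
    by (simp add: divide_le_eq le_divide_eq mult.commute)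
  ultimately have "p'/p^2 \<ge> 1/(L*r^2*x)" by linarith
  moreover have "1/(L*r^2*x) + L*x \<ge> 2/r"
  proof -
    have "(L*x*r - 1)^2 \<ge> 0" by simp
    hence "(L*x*r)^2 + 1 \<ge> 2*(L*x*r)" by (simp add: power2_diff)
    hence "((L*x*r)^2 + 1)/(L*r^2*x) \<ge> 2*(L*x*r)/(L*r^2*x)"
      using assms by (intro divide_right_mono) auto
    moreover have "((L*x*r)^2 + 1)/(L*r^2*x) = 1/(L*r^2*x) + L*x"
      using assms by (simp add: field_simps power2_eq_square)
    moreover have "2*(L*x*r)/(L*r^2*x) = 2/r" using assms by (simp add: field_simps power2_eq_square)
    ultimately show ?thesis by simp
  qed
  ultimately show ?thesis by simp
qed

lemma core:
  fixes P P' X :: "real \<Rightarrow> real"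
  assumes a: "0 < a" "a \<le> b" and L: "L > 0"
   and dP: "\<And>t. t \<in> {a..b} \<Longrightarrow> DERIV P t :> P' t"
   and nz: "\<And>t. t \<in> {a..b} \<Longrightarrow> P t \<noteq> 0"
   and ineq: "\<And>t. t \<in> {a..b} \<Longrightarrow> P' t / (P t)^2 + L * X t \<ge> 2/t"
   and cX: "continuous_on {a/2..2*b} X"
  shows "2*(ln b - ln a) \<le> L * integral {a..b} X + 1/P a - 1/P b"
proof -
  define c where "c = a/2"
  define d where "d = 2*b"
  have cd: "c < a" "b < d" "0 < c" using a by (auto simp: c_def d_def)
  define \<Phi> where "\<Phi> = (\<lambda>t. - inverse (P t) + L * integral {c..t} X - 2 * ln t)" 
  have M: "\<Phi> a \<le> \<Phi> b"
  proof (rule mono_deriv[OF a(2), where f'="\<lambda>t. P' t/(P t)^2 + L*X t - 2/t"])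
    fix t assume t: "a \<le> t" "t \<le> b"
    have tt: "t \<in> {a..b}" using t by auto
    have I: "((\<lambda>x. integral {c..x} X) has_real_derivative X t) (at t)"
      using integral_has_real_derivative[of c d X t] cX at_within_Icc_at[of c t d] cd t
      by (simp add: c_def d_def)
    have d1: "DERIV (\<lambda>t. inverse (P t)) t :> (- (P' t * inverse (P t ^ Suc (Suc 0))))"
      by (rule DERIV_inverse_fun[OF dP[OF tt] nz[OF tt]])
    have d2: "DERIV (\<lambda>t. 2 * ln t) t :> 2 * inverse t"
      using DERIV_cmult[OF DERIV_ln[of t], of 2] t cd by simp
    have D: "DERIV \<Phi> t :> (- (- (P' t * inverse (P t ^ Suc (Suc 0)))) + L * X t - 2 * inverse t)"
      unfolding \<Phi>_def
      by (rule DERIV_diff[OF DERIV_add[OF DERIV_minus[OF d1] DERIV_cmult[OF I]] d2])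
    have e: "- (- (P' t * inverse (P t ^ Suc (Suc 0)))) + L * X t - 2 * inverse t = P' t/(P t)^2 + L*X t - 2/t"
      by (simp add: divide_inverse power2_eq_square)
    from D[unfolded e] ineq[OF tt] show "DERIV \<Phi> t :> P' t/(P t)^2 + L*X t - 2/t \<and> 0 \<le> P' t/(P t)^2 + L*X t - 2/t"
      by simp
  qed
  have C: "integral {c..a} X + integral {a..b} X = integral {c..b} X"
  proof -
    have "X integrable_on {c..b}"
      by (rule integrable_continuous_interval, rule continuous_on_subset[OF cX]) (use cd a in \<open>auto simp: c_def d_def\<close>)
    then show ?thesis using Henstock_Kurzweil_Integration.integral_combine[of c a b X] cd a by simp
  qed
  have "L*integral {c..b} X = L*integral {c..a} X + L*integral {a..b} X"
    by (simp flip: C add: distrib_left)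
  with M show ?thesis unfolding \<Phi>_def by (simp add: divide_inverse)
qed

lemma pointwise_alg:
  fixes u u' g' q lam :: complex and r \<kappa> mm :: real
  assumes "g' = (of_real mm + \<i>*q) * u" "lam = 1 - \<i> * of_real \<kappa>"
  shows "Re (lam * ((of_real (r^2)*u' + of_real r*u) * (of_real r * cnj u' + 1 * cnj u) + g' * (of_real r * cnj u)))
    = r*(cmod (u + of_real r * u'))^2 + mm*r*(cmod u)^2 + r*(cmod u)^2 * Re (lam*\<i>*q)"
proof -
  have "(of_real (r^2)*u' + of_real r*u) * (of_real r * cnj u' + 1 * cnj u) + g' * (of_real r * cnj u)
     = of_real r * ((u + of_real r*u')*cnj(u + of_real r*u')) + (of_real mm + \<i>*q) * of_real r * (u * cnj u)"
    using assms(1) by (simp add: algebra_simps power2_eq_square)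
  also have "\<dots> = of_real (r * (cmod (u + of_real r * u'))^2) + (of_real mm + \<i>*q) * of_real (r * (cmod u)^2)"
    by (simp only: complex_norm_square[symmetric] of_real_mult) (simp add: algebra_simps)
  finally have e: "(of_real (r^2)*u' + of_real r*u) * (of_real r * cnj u' + 1 * cnj u) + g' * (of_real r * cnj u)
    = of_real (r * (cmod (u + of_real r * u'))^2) + (of_real mm + \<i>*q) * of_real (r * (cmod u)^2)" .
  have rl: "Re lam = 1" using assms(2) by simp
  show ?thesis unfolding e by (simp add: algebra_simps rl)
qed

lemma sign_lemma:
  fixes \<gamma> :: complex and c \<kappa> e C :: real
  assumes "\<gamma> \<noteq> 0" "\<kappa> * Re \<gamma> = e * C" "e = 1 \<or> e = -1" "e * c \<ge> 0" "\<bar>Im \<gamma>\<bar> \<le> C"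
  shows "Re ((1 - \<i> * of_real \<kappa>) * \<i> * (of_real c / \<gamma>)) \<ge> 0"
proof -
  have "(1 - \<i> * of_real \<kappa>) * \<i> * (of_real c / \<gamma>) = (of_real (\<kappa> * c) + \<i> * of_real c) / \<gamma>"
    by (simp add: algebra_simps)
  hence "Re ((1 - \<i> * of_real \<kappa>) * \<i> * (of_real c / \<gamma>)) = c * (\<kappa> * Re \<gamma> + Im \<gamma>) / (cmod \<gamma>)^2"
    by (simp add: Re_divide' algebra_simps)
  also have "\<dots> = c * (e*C + Im \<gamma>) / (cmod \<gamma>)^2" using assms(2) by simp
  also have "\<dots> \<ge> 0"
  proof -
    have "c * (e*C + Im \<gamma>) \<ge> 0" using assms(3-5)
      by (auto intro: mult_nonneg_nonneg mult_nonpos_nonpos)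
    thus ?thesis by simp
  qed
  finally show ?thesis .
qed

theorem proposition2p3:
  fixes W W' :: "real \<Rightarrow> real"
    and m :: int and s :: complex
    and u u' g' :: "real \<Rightarrow> complex"
  assumes W_deriv: "\<And>r. r \<ge> 0 \<Longrightarrow> (W has_real_derivative W' r) (at r within {0..})"
    and W'_cont: "continuous_on {0..} W'"
    and W_bdd: "bounded (W ` {0..})"
    and W'_bdd: "bounded (W' ` {0..})"
    and W_mono: "mono_on {0..} W \<or> monotone_on {0..} (\<le>) (\<ge>) W"
    and m_nz: "m \<noteq> 0"
    and s_re: "Re s \<noteq> 0"
    and u_deriv: "\<And>r. r > 0 \<Longrightarrow> (u has_vector_derivative u' r) (at r)"
    and flux_deriv: "\<And>r. r > 0 \<Longrightarrow>
        ((\<lambda>t. complex_of_real (t\<^sup>2) * u' t + complex_of_real t * u t) has_vector_derivative g' r) (at r)"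
    and eqn: "\<And>r. r > 0 \<Longrightarrow>
        - g' r + (of_int (m\<^sup>2) + \<i> * of_int m * complex_of_real (r * W' r) / gam W m s r) * u r = 0"
    and u_L2: "(\<lambda>r. r * (cmod (u r))\<^sup>2) integrable_on {0<..}"
    and u'_L2: "(\<lambda>r. r * (cmod (u' r))\<^sup>2) integrable_on {0<..}"
  shows "\<forall>r>0. u r = 0"
proof -
  have Wd: "(W has_real_derivative W' r) (at r)" if r: "r > 0" for r
  proof -
    have "(W has_real_derivative W' r) (at r within {0<..})"
      by (rule has_field_derivative_subset[OF W_deriv]) (use r in auto)
    moreover have "at r within {0<..} = at r" by (rule at_within_open) (use r in auto)
    ultimately show ?thesis by simp
  qed
  obtain \<epsilon> :: real where eps: "\<epsilon> = 1 \<or> \<epsilon> = -1" "\<And>r. r > 0 \<Longrightarrow> \<epsilon> * W' r \<ge> 0"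
  proof (cases "mono_on {0..} W")
    case True
    have "W' r \<ge> 0" if r: "r > 0" for r
    proof (rule ccontr)
      assume "\<not> W' r \<ge> 0"
      then obtain d where d: "d > 0" "\<forall>h>0. h < d \<longrightarrow> W r > W (r + h)"
        using DERIV_neg_dec_right[OF Wd[OF r]] by auto
      have "W r \<le> W (r + d/2)" using r d(1) by (intro mono_onD[OF True]) auto
      moreover have "W r > W (r + d/2)" using d by simp
      ultimately show False by linarith
    qed
    thus ?thesis using that[of 1] by auto
  next
    case False
    hence anti: "monotone_on {0..} (\<le>) (\<ge>) W" using W_mono by auto
    have "W' r \<le> 0" if r: "r > 0" for r
    proof (rule ccontr)
      assume "\<not> W' r \<le> 0"
      then obtain d where d: "d > 0" "\<forall>h>0. h < d \<longrightarrow> W r < W (r + h)"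
        using DERIV_pos_inc_right[OF Wd[OF r]] by auto
      have "W r \<ge> W (r + d/2)" using r d(1) monotone_onD[OF anti, of r "r + d/2"] by auto
      moreover have "W r < W (r + d/2)" using d by simp
      ultimately show False by linarith
    qed
    thus ?thesis using that[of "-1"] by auto
  qed
  obtain B where B: "\<And>t. t \<ge> 0 \<Longrightarrow> \<bar>W t\<bar> \<le> B"
    using W_bdd by (fastforce simp: bounded_iff)
  have B0: "B \<ge> 0" using B[of 0] by simp
  have Wc: "continuous_on {0..} W"
    unfolding continuous_on_eq_continuous_within using W_deriv DERIV_continuous by (metis atLeast_iff)
  have Om: "\<bar>Omega W r\<bar> \<le> B" if r: "r > 0" for r
  proof -
    have int: "((\<lambda>s. W s * s) has_integral integral {0..r} (\<lambda>s. W s * s)) (cbox 0 r)"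
      unfolding cbox_interval
      by (intro integrable_integral integrable_continuous_interval continuous_intros continuous_on_subset[OF Wc]) auto
    have "norm (integral {0..r} (\<lambda>s. W s * s)) \<le> (B*r) * Henstock_Kurzweil_Integration.content (cbox 0 r)"
    proof (rule has_integral_bound[OF _ int])
      show "0 \<le> B*r" using B0 r by simp
      fix x assume "x \<in> cbox 0 r"
      hence x: "0 \<le> x" "x \<le> r" by (auto simp: cbox_interval)
      have "\<bar>W x\<bar> * \<bar>x\<bar> \<le> B * r" using B[OF x(1)] x B0 by (intro mult_mono) auto
      thus "norm (W x * x) \<le> B * r" by (simp add: abs_mult)
    qed
    hence "\<bar>integral {0..r} (\<lambda>s. W s * s)\<bar> \<le> B * r^2" using r
      by (simp add: cbox_interval content_real power2_eq_square mult.assoc)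
    thus ?thesis unfolding Omega_def using r by (simp add: abs_divide divide_le_eq)
  qed
  define C where "C = \<bar>Im s\<bar> + \<bar>real_of_int m\<bar> * B"
  have ImG: "\<bar>Im (gam W m s r)\<bar> \<le> C" if r: "r > 0" for r
  proof -
    have "\<bar>Im (gam W m s r)\<bar> = \<bar>Im s + real_of_int m * Omega W r\<bar>" by (simp add: gam_def)
    also have "\<dots> \<le> \<bar>Im s\<bar> + \<bar>real_of_int m\<bar> * \<bar>Omega W r\<bar>" by (simp add: abs_mult abs_triangle_ineq[THEN order_trans])
    also have "\<dots> \<le> C" unfolding C_def using Om[OF r] by (simp add: mult_left_mono)
    finally show ?thesis .
  qed
  have ReG: "Re (gam W m s r) = Re s" for r by (simp add: gam_def)
  have gnz: "gam W m s r \<noteq> 0" for r using ReG[of r] s_re by auto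
  define e where "e = sgn (real_of_int m) * \<epsilon>"
  have e: "e = 1 \<or> e = -1" using m_nz eps(1) by (auto simp: e_def sgn_if)
  have ec: "e * (real_of_int m * (r * W' r)) \<ge> 0" if r: "r > 0" for r
  proof -
    have "e * (real_of_int m * (r * W' r)) = \<bar>real_of_int m\<bar> * r * (\<epsilon> * W' r)"
      by (cases "m > 0") (auto simp: e_def sgn_if)
    moreover have "\<bar>real_of_int m\<bar> * r * (\<epsilon> * W' r) \<ge> 0" using eps(2)[OF r] r by simp
    ultimately show ?thesis by linarith
  qed
  define \<kappa> where "\<kappa> = e*C/Re s"
  have \<kappa>: "\<kappa> * Re s = e * C" using s_re by (simp add: \<kappa>_def)
  define lam where "lam = 1 - \<i> * of_real \<kappa>"
  define L where "L = 1 + \<kappa>^2"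
  have L: "L > 0" unfolding L_def by (simp add: add_pos_nonneg)
  have lamL: "(cmod lam)^2 = L" unfolding lam_def L_def by (simp add: cmod_power2)
  define q where "q r = of_int m * of_real (r * W' r) / gam W m s r" for r
  have g'eq: "g' r = (of_real (real_of_int (m^2)) + \<i> * q r) * u r" if r: "r > 0" for r
    using eqn[OF r] by (simp add: q_def algebra_simps)
  have qsign: "Re (lam * \<i> * q r) \<ge> 0" if r: "r > 0" for r
  proof -
    have qr: "q r = of_real (real_of_int m * (r * W' r)) / gam W m s r" by (simp add: q_def)
    show ?thesis unfolding lam_def qr
      by (rule sign_lemma[where \<gamma>="gam W m s r" and c="real_of_int m * (r * W' r)" and \<kappa>=\<kappa> and e=e and C=C])
         (use gnz \<kappa> ReG e ec[OF r] ImG[OF r] in auto)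
  qed
  define fl where "fl = (\<lambda>t. complex_of_real (t\<^sup>2) * u' t + complex_of_real t * u t)"
  define H where "H = (\<lambda>t. fl t * (of_real t * cnj (u t)))"
  define P where "P = (\<lambda>t. Re (lam * H t))"
  define Hd where "Hd r = fl r * (of_real r * cnj (u' r) + 1 * cnj (u r)) + g' r * (of_real r * cnj (u r))" for r
  define X where "X = (\<lambda>r. r * (cmod (u r))^2)"
  define Y where "Y = (\<lambda>r. r * (cmod (u r + of_real r * u' r))^2)"
  define Pd where "Pd r = Re (lam * Hd r)" for r
  have dP: "DERIV P r :> Pd r" if r: "r > 0" for r
  proof -
    have d1: "((\<lambda>t. complex_of_real t) has_vector_derivative 1) (at r)"
      using has_vector_derivative_of_real[OF DERIV_ident] by simp
    have d2: "((\<lambda>t. of_real t * cnj (u t)) has_vector_derivative (of_real r * cnj (u' r) + 1 * cnj (u r))) (at r)"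
      by (rule has_vector_derivative_mult[OF d1 has_vector_derivative_cnj[OF u_deriv[OF r]]])
    have d3: "(H has_vector_derivative Hd r) (at r)"
      unfolding H_def Hd_def by (rule has_vector_derivative_mult[OF flux_deriv[OF r, folded fl_def] d2])
    have d4: "((\<lambda>t. lam * H t) has_vector_derivative lam * Hd r) (at r)"
      using bounded_linear.has_vector_derivative[OF bounded_linear_mult_right d3] by simp
    have d5: "(P has_vector_derivative Pd r) (at r)"
      unfolding P_def Pd_def using bounded_linear.has_vector_derivative[OF bounded_linear_Re d4] by simp
    thus ?thesis by (simp add: has_real_derivative_iff_has_vector_derivative)
  qed
  have Pd_eq: "Pd r = Y r + real_of_int (m^2) * X r + X r * Re (lam*\<i>*q r)" if r: "r > 0" for r
  proof -
    have "Pd r = r*(cmod (u r + of_real r * u' r))^2 + real_of_int (m^2)*r*(cmod (u r))^2 + r*(cmod (u r))^2 * Re (lam*\<i>*q r)"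
      unfolding Pd_def Hd_def fl_def
      by (rule pointwise_alg[where g'="g' r" and mm="real_of_int (m^2)" and q="q r" and u="u r" and u'="u' r"
            and lam=lam and \<kappa>=\<kappa> and r=r]) (use g'eq[OF r] lam_def in auto)
    thus ?thesis by (simp add: X_def Y_def mult.assoc)
  qed
  have Xnn: "X r \<ge> 0" if "r > 0" for r using that by (simp add: X_def)
  have Ynn: "Y r \<ge> 0" if "r > 0" for r using that by (simp add: Y_def)
  have Pd_ge: "Pd r \<ge> Y r \<and> Pd r \<ge> real_of_int (m^2) * X r" if r: "r > 0" for r
  proof -
    have "X r * Re (lam*\<i>*q r) \<ge> 0" using Xnn[OF r] qsign[OF r] by simp
    moreover have "real_of_int (m^2) * X r \<ge> 0" using Xnn[OF r] by simp
    ultimately show ?thesis using Pd_eq[OF r] Ynn[OF r] by linarith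
  qed
  have Pbound: "(P r)^2 \<le> L * r^2 * X r * Y r" if r: "r > 0" for r
  proof -
    have Hr: "H r = of_real r * (u r + of_real r * u' r) * (of_real r * cnj (u r))"
      by (simp add: H_def fl_def algebra_simps power2_eq_square)
    have cH: "cmod (H r) = r * cmod (u r + of_real r * u' r) * (r * cmod (u r))"
      unfolding Hr using r by (simp add: norm_mult)
    have "\<bar>P r\<bar> \<le> cmod lam * cmod (H r)"
      unfolding P_def using abs_Re_le_cmod[of "lam * H r"] by (simp add: norm_mult)
    hence "(P r)^2 \<le> (cmod lam * cmod (H r))^2"
      by (metis abs_ge_zero power2_abs power_mono)
    also have "\<dots> = L * r^2 * X r * Y r"
      unfolding power_mult_distrib lamL cH X_def Y_def by (simp add: power2_eq_square algebra_simps)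
    finally show ?thesis .
  qed
  have Pnz: "u r \<noteq> 0" if "P r \<noteq> 0" for r using that by (auto simp: P_def H_def)
  have uc: "continuous_on {0<..} u"
    by (intro continuous_at_imp_continuous_on ballI) (auto intro: has_vector_derivative_continuous u_deriv)
  have Xc: "continuous_on {0<..} X"
    unfolding X_def by (intro continuous_intros uc)
  have Xint: "X integrable_on {0<..}" using u_L2 by (simp add: X_def)
  define IU where "IU = integral {0<..} X"
  have IU0: "IU \<ge> 0" unfolding IU_def by (rule integral_nonneg[OF Xint]) (simp add: Xnn)
  have Xle: "integral {a..b} X \<le> IU" if ab: "0 < a" "a \<le> b" for a b
    unfolding IU_def
  proof (rule integral_subset_le)
    show "{a..b} \<subseteq> {0<..}" using ab by auto
    show "X integrable_on {a..b}"
      by (rule integrable_continuous_interval, rule continuous_on_subset[OF Xc]) (use ab in auto)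
  qed (use Xint Xnn in auto)
  have Pmono: "P a \<le> P b" if ab: "0 < a" "a \<le> b" for a b
  proof (rule mono_deriv[OF ab(2), where f'=Pd])
    fix x assume "a \<le> x" "x \<le> b"
    hence x: "x > 0" using ab by simp
    have "real_of_int (m^2) * X x \<ge> 0" using Xnn[OF x] by simp
    thus "DERIV P x :> Pd x \<and> 0 \<le> Pd x" using dP[OF x] Pd_ge[OF x] by linarith
  qed
  have ineq: "Pd t / (P t)^2 + L * X t \<ge> 2/t" if t: "t > 0" "P t \<noteq> 0" for t
  proof (rule amgm[where y="Y t"])
    have "u t \<noteq> 0" using Pnz t(2) .
    thus "X t > 0" using t by (simp add: X_def)
  qed (use t L Ynn Pd_ge Pbound in auto)
  have core': "2*(ln b - ln a) \<le> L * integral {a..b} X + 1/P a - 1/P b"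
    if ab: "0 < a" "a \<le> b" and nz: "\<And>t. t \<in> {a..b} \<Longrightarrow> P t \<noteq> 0" for a b
  proof (rule core[where P'=Pd])
    show "continuous_on {a/2..2*b} X" by (rule continuous_on_subset[OF Xc]) (use ab in auto)
  qed (use ab L nz dP ineq in auto)
  have Pge: "P r \<ge> 0" if r: "r > 0" for r
  proof (rule ccontr)
    assume "\<not> P r \<ge> 0"
    hence Pr: "P r < 0" by simp
    define M where "M = L*IU - 1/P r + 1"
    have "1/P r < 0" using Pr by simp
    moreover have "L*IU \<ge> 0" using L IU0 by simp
    ultimately have M: "M > 0" unfolding M_def by linarith
    define a where "a = r * exp (-M/2)"
    have a0: "a > 0" using r by (simp add: a_def)
    have ar: "a \<le> r" unfolding a_def using r M by (simp add: mult_le_cancel_left1)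
    have lna: "ln a = ln r - M/2" unfolding a_def using r by (simp add: ln_mult)
    have neg: "P t < 0" if "t \<in> {a..r}" for t using Pmono[of t r] that a0 Pr by auto
    have "2*(ln r - ln a) \<le> L * integral {a..r} X + 1/P a - 1/P r"
      by (rule core'[OF a0 ar]) (use neg in force)
    moreover have "1/P a < 0" using neg[of a] ar by simp
    moreover have "L * integral {a..r} X \<le> L * IU" using Xle[OF a0 ar] L by simp
    ultimately have "2*(ln r - ln a) < L * IU - 1/P r" by linarith
    moreover have "2*(ln r - ln a) = M" using lna by simp
    ultimately show False unfolding M_def by linarith
  qed
  have Ple: "P r \<le> 0" if r: "r > 0" for r
  proof (rule ccontr)
    assume "\<not> P r \<le> 0"
    hence Pr: "P r > 0" by simp
    define M where "M = L*IU + 1/P r + 1"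
    have "1/P r > 0" using Pr by simp
    moreover have "L*IU \<ge> 0" using L IU0 by simp
    ultimately have M: "M > 0" unfolding M_def by linarith
    define b where "b = r * exp (M/2)"
    have rb: "r \<le> b" unfolding b_def using r M by simp
    have lnb: "ln b = ln r + M/2" unfolding b_def using r by (simp add: ln_mult)
    have pos: "P t > 0" if "t \<in> {r..b}" for t using Pmono[of r t] that r Pr by auto
    have "2*(ln b - ln r) \<le> L * integral {r..b} X + 1/P r - 1/P b"
      by (rule core'[OF r rb]) (use pos in force)
    moreover have "1/P b > 0" using pos[of b] rb by simp
    moreover have "L * integral {r..b} X \<le> L * IU" using Xle[OF r rb] L by simp
    ultimately have "2*(ln b - ln r) < L * IU + 1/P r" by linarith
    moreover have "2*(ln b - ln r) = M" using lnb by simp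
    ultimately show False unfolding M_def by linarith
  qed
  show ?thesis
  proof (intro allI impI)
    fix r :: real assume r: "r > 0"
    have P0: "P t = 0" if "t \<in> {0<..}" for t using Pge[of t] Ple[of t] that by auto
    have "DERIV (\<lambda>_. 0) r :> Pd r"
      by (rule has_field_derivative_transform_within_open[OF dP[OF r], of "{0<..}"]) (use r P0 in auto)
    hence "Pd r = 0" using DERIV_const DERIV_unique by blast
    hence "real_of_int (m^2) * X r \<le> 0" using Pd_ge[OF r] by simp
    moreover have "real_of_int (m^2) > 0" using m_nz by simp
    ultimately have "X r \<le> 0" by (simp add: mult_le_0_iff)
    hence "(cmod (u r))^2 \<le> 0" using r by (simp add: X_def mult_le_0_iff)
    thus "u r = 0" by simp
  qed
qed

end
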